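(* Let $n\ge 1$ and let $D$ be a diagram of $[n]^2$. Then the vertex set of the Schubitope $\mathcal{S}_D$ is \[\{x(w)\colon w\in S_n\},\] where, for $w\in S_n$, $x(w)=(x_1,\ldots,x_n)$ is the vector such that $x_k$ ($1\le k\le n$) is the number of appearances of the integer $k$ in the filling $\mathcal{F}_w(D)$.
   Context: $[n]=\{1,\ldots,n\}$. A diagram $D$ of $[n]^2$ is a set of boxes $(i,j)$ (row $i$, column $j$, rows numbered $1,\dots,n$ top to bottom, columns $1,\dots,n$ left to right) of the $n\times n$ grid. For $1\le j\le n$ and $S\subseteq[n]$, let $\mathrm{word}_{j,S}(D)$ be the string obtained by reading column $j$ from top to bottom and recording, for row $i$: "(" if $(i,j)\notin D$ and $i\in S$; ")" if $(i,j)\in D$ and $i\notin S$; "$\star$" if $(i,j)\in D$ and $i\in S$ (nothing otherwise). Let $\theta_D^j(S)$ be the number of matched pairs "()" in this string (standard parenthesis matching, ignoring $\star$'s) plus the number of $\star$'s, and $\theta_D(S)=\sum_{j=1}^n\theta_D^j(S)$. The Schubitope is $\mathcal{S}_D=\{x\in\mathbb{R}^n\colon \sum_{i\in[n]}x_i=\#D,\ \sum_{i\in S}x_i\le\theta_D(S)\text{ for all }S\subsetneq[n]\}$. For $w=w_1\cdots w_n\in S_n$, the filling $\mathcal{F}_w(D)$ is defined column by column: for each column $D_j=\{i\colon (i,j)\in D\}$, for $k=1,2,\ldots,n$ in turn, place $w_k$ into the topmost box of column $j$ of $D$ that is still empty and whose row index is $\ge w_k$; if no such box exists, $w_k$ is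 skipped for this column. Boxes may remain empty. *)

theory Defs
  imports "HOL-Analysis.Analysis" "HOL-Combinatorics.Permutations"
begin

(* Rows and columns are indexed by a finite linearly ordered type 'n,
   standing for [n] = {1,...,n} with its usual order (n = CARD('n) >= 1).
   Row order "top to bottom" = increasing order of 'n. *)

datatype psym = POpen | PClose | PStar

definition sym_of :: "('n::linorder \<times> 'n) set \<Rightarrow> 'n \<Rightarrow> 'n set \<Rightarrow> 'n \<Rightarrow> psym list" where
  "sym_of D j S i =
     (if (i,j) \<notin> D \<and> i \<in> S then [POpen]
      else if (i,j) \<in> D \<and> i \<notin> S then [PClose]
      else if (i,j) \<in> D \<and> i \<in> S then [PStar]
      else [])"

definition word_col :: "('n::{finite,linorder} \<times> 'n) set \<Rightarrow> 'n \<Rightarrow> 'n set \<Rightarrow> psym list" where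
  "word_col D j S = concat (map (sym_of D j S) (sorted_list_of_set (UNIV :: 'n set)))"

(* number of matched pairs "()" (standard parenthesis matching, stars ignored);
   the first argument is the number of currently unmatched "(" *)
fun matched :: "nat \<Rightarrow> psym list \<Rightarrow> nat" where
  "matched k [] = 0"
| "matched k (POpen # xs) = matched (Suc k) xs"
| "matched k (PClose # xs) = (if 0 < k then Suc (matched (k - 1) xs) else matched k xs)"
| "matched k (PStar # xs) = matched k xs"

definition theta_col :: "('n::{finite,linorder} \<times> 'n) set \<Rightarrow> 'n \<Rightarrow> 'n set \<Rightarrow> nat" where
  "theta_col D j S = matched 0 (word_col D j S) + length (filter (\<lambda>c. c = PStar) (word_col D j S))"

definition theta :: "('n::{finite,linorder} \<times> 'n) set \<Rightarrow> 'n set \<Rightarrow> nat" where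
  "theta D S = (\<Sum>j\<in>UNIV. theta_col D j S)"

definition schubitope :: "('n::{finite,linorder} \<times> 'n) set \<Rightarrow> (real ^ 'n::{finite,linorder}) set" where
  "schubitope D = {x. (\<Sum>i\<in>UNIV. x $ i) = real (card D) \<and>
                      (\<forall>S. S \<subset> UNIV \<longrightarrow> (\<Sum>i\<in>S. x $ i) \<le> real (theta D S))}"

definition fill_step :: "('n::{finite,linorder} \<times> 'n) set \<Rightarrow> 'n \<Rightarrow> ('n \<Rightarrow> 'n option) \<Rightarrow> 'n \<Rightarrow> ('n \<Rightarrow> 'n option)" where
  "fill_step D j f v =
     (let C = {i. (i,j) \<in> D \<and> f i = None \<and> v \<le> i}
      in if C = {} then f else f(Min C := Some v))"

(* filling of column j by w = w_1 ... w_n (w_k = w k, positions k in increasing order);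
   result maps row i to the entry of box (i,j), None if empty *)
definition filling_col :: "('n::{finite,linorder} \<times> 'n) set \<Rightarrow> ('n \<Rightarrow> 'n) \<Rightarrow> 'n \<Rightarrow> ('n \<Rightarrow> 'n option)" where
  "filling_col D w j = fold (\<lambda>k f. fill_step D j f (w k)) (sorted_list_of_set (UNIV :: 'n set)) (\<lambda>_. None)"

definition xw :: "('n::{finite,linorder} \<times> 'n) set \<Rightarrow> ('n \<Rightarrow> 'n) \<Rightarrow> real ^ ('n::{finite,linorder})" where
  "xw D w = (\<chi> k. real (card {(i,j). filling_col D w j i = Some k}))"

end

theory Submission
  imports Defs
begin


fun MS :: "('a \<Rightarrow> bool) \<Rightarrow> ('a \<Rightarrow> bool) \<Rightarrow> 'a list \<Rightarrow> nat" where
  "MS P Q [] = 0"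
| "MS P Q (i # rs) = min (length (filter Q (i # rs))) ((if P i then 1 else 0) + MS P Q rs)"

lemma MS_le_Q: "MS P Q rs \<le> length (filter Q rs)"
  by (induction rs) auto

lemma MS_le_split: "MS P Q rs \<le> length (filter P (take m rs)) + length (filter Q (drop m rs))"
proof (induction rs arbitrary: m)
  case Nil then show ?case by simp
next
  case (Cons i rs) then show ?case by (cases m) (auto simp: min_le_iff_disj)
qed

lemma MS_split_ex: "\<exists>m. MS P Q rs = length (filter P (take m rs)) + length (filter Q (drop m rs))"
proof (induction rs)
  case Nil then show ?case by simp
next
  case (Cons i rs)
  then obtain m where m: "MS P Q rs = length (filter P (take m rs)) + length (filter Q (drop m rs))" by blast
  show ?case
  proof (cases "length (filter Q (i # rs)) \<le> (if P i then 1 else 0) + MS P Q rs")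
    case True then show ?thesis by (intro exI[of _ 0]) simp
  next
    case False then show ?thesis using m by (intro exI[of _ "Suc m"]) auto
  qed
qed

lemma MS_all: "(\<And>x. P x) \<Longrightarrow> MS P Q rs = length (filter Q rs)"
  by (induction rs) auto

lemma matched_MS:
  "matched k (concat (map (sym_of D j S) rs)) + length (filter (\<lambda>c. c = PStar) (concat (map (sym_of D j S) rs)))
   = min (length (filter (\<lambda>i. (i,j) \<in> D) rs)) (k + MS (\<lambda>i. i \<in> S) (\<lambda>i. (i,j) \<in> D) rs)"
proof (induction rs arbitrary: k)
  case Nil then show ?case by simp
next
  case (Cons i rs)
  have le: "MS (\<lambda>i. i \<in> S) (\<lambda>i. (i,j) \<in> D) rs \<le> length (filter (\<lambda>i. (i,j) \<in> D) rs)"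
    by (rule MS_le_Q)
  show ?case
    using Cons.IH[of "Suc k"] Cons.IH[of k] Cons.IH[of "k - 1"] le
    by (cases "(i,j) \<in> D"; cases "i \<in> S"; cases k) (auto simp: sym_of_def min_def)
qed

lemma theta_col_MS: "theta_col D j S = MS (\<lambda>i. i \<in> S) (\<lambda>i. (i,j) \<in> D) (sorted_list_of_set UNIV)"
  using matched_MS[of 0 D j S "sorted_list_of_set UNIV"] MS_le_Q[of "\<lambda>i. i \<in> S" "\<lambda>i. (i,j) \<in> D" "sorted_list_of_set UNIV"]
  by (simp add: theta_col_def word_col_def)



definition inv_f :: "('n::{finite,linorder} \<times> 'n) set \<Rightarrow> 'n \<Rightarrow> 'n set \<Rightarrow> ('n \<Rightarrow> 'n option) \<Rightarrow> bool" where
  "inv_f D j V f \<longleftrightarrow>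
     (\<forall>i v. f i = Some v \<longrightarrow> (i,j) \<in> D \<and> v \<le> i \<and> v \<in> V) \<and>
     (\<forall>i i' v. f i = Some v \<longrightarrow> f i' = Some v \<longrightarrow> i = i') \<and>
     (\<forall>v\<in>V. \<forall>i. (i,j) \<in> D \<longrightarrow> v \<le> i \<longrightarrow> f i = None \<longrightarrow> (\<exists>r\<le>i. f r = Some v))"

lemma fill_step_persist: "f i = Some v \<Longrightarrow> fill_step D j f u i = Some v"
proof -
  assume a: "f i = Some v"
  let ?C = "{i. (i,j) \<in> D \<and> f i = None \<and> u \<le> i}"
  show ?thesis
  proof (cases "?C = {}")
    case True then show ?thesis using a by (simp add: fill_step_def)
  next
    case False
    then have "Min ?C \<in> ?C" by (intro Min_in) auto
    then have "Min ?C \<noteq> i" using a by auto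
    then show ?thesis using a by (simp add: fill_step_def Let_def)
  qed
qed

lemma fill_step_new: "fill_step D j f u i = Some v \<Longrightarrow> f i = Some v \<or> v = u"
  by (auto simp: fill_step_def Let_def split: if_splits)

lemma inv_f_empty: "inv_f D j {} (\<lambda>_. None)"
  by (simp add: inv_f_def)

lemma inv_f_step:
  assumes inv: "inv_f D j V f" and u: "u \<notin> V"
  shows "inv_f D j (insert u V) (fill_step D j f u)"
proof -
  let ?C = "{i. (i,j) \<in> D \<and> f i = None \<and> u \<le> i}"
  note I = inv[unfolded inv_f_def]
  have I1: "\<And>i v. f i = Some v \<Longrightarrow> (i,j) \<in> D \<and> v \<le> i \<and> v \<in> V" using I by blast
  have I2: "\<And>i i' v. f i = Some v \<Longrightarrow> f i' = Some v \<Longrightarrow> i = i'" using I by blast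
  have I3: "\<And>v i. v \<in> V \<Longrightarrow> (i,j) \<in> D \<Longrightarrow> v \<le> i \<Longrightarrow> f i = None \<Longrightarrow> (\<exists>r\<le>i. f r = Some v)" using I by blast
  show ?thesis
  proof (cases "?C = {}")
    case True
    then have f': "fill_step D j f u = f" by (simp add: fill_step_def)
    show ?thesis unfolding f' inv_f_def
    proof (intro conjI)
      show "\<forall>i v. f i = Some v \<longrightarrow> (i, j) \<in> D \<and> v \<le> i \<and> v \<in> insert u V" using I1 by blast
      show "\<forall>i i' v. f i = Some v \<longrightarrow> f i' = Some v \<longrightarrow> i = i'" using I2 by blast
      show "\<forall>v\<in>insert u V. \<forall>i. (i, j) \<in> D \<longrightarrow> v \<le> i \<longrightarrow> f i = None \<longrightarrow> (\<exists>r\<le>i. f r = Some v)"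
        using I3 True by blast
    qed
  next
    case False
    define m where "m = Min ?C"
    have mC: "m \<in> ?C" unfolding m_def using False by (intro Min_in) auto
    have mle: "\<And>i. i \<in> ?C \<Longrightarrow> m \<le> i" unfolding m_def by (intro Min_le) auto
    have f': "fill_step D j f u = f(m := Some u)"
      by (subst fill_step_def) (simp only: Let_def if_not_P[OF False] m_def)
    show ?thesis unfolding f' inv_f_def
    proof (intro conjI)
      show "\<forall>i v. (f(m := Some u)) i = Some v \<longrightarrow> (i, j) \<in> D \<and> v \<le> i \<and> v \<in> insert u V"
        using I1 mC by auto
      show "\<forall>i i' v. (f(m := Some u)) i = Some v \<longrightarrow> (f(m := Some u)) i' = Some v \<longrightarrow> i = i'"
      proof (intro allI impI)
        fix i i' v assume a: "(f(m := Some u)) i = Some v" "(f(m := Some u)) i' = Some v"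
        show "i = i'"
        proof (cases "i = m"; cases "i' = m")
          assume "i = m" "i' \<noteq> m" then show ?thesis using a I1 u by auto
        next
          assume "i \<noteq> m" "i' = m" then show ?thesis using a I1 u by auto
        next
          assume "i \<noteq> m" "i' \<noteq> m" then show ?thesis using a I2 by auto
        qed simp
      qed
      show "\<forall>v\<in>insert u V. \<forall>i. (i, j) \<in> D \<longrightarrow> v \<le> i \<longrightarrow> (f(m := Some u)) i = None \<longrightarrow> (\<exists>r\<le>i. (f(m := Some u)) r = Some v)"
      proof (intro ballI allI impI)
        fix v i assume v: "v \<in> insert u V" and i: "(i,j) \<in> D" "v \<le> i" "(f(m := Some u)) i = None"
        then have fi: "f i = None" "i \<noteq> m" by (auto split: if_splits)
        show "\<exists>r\<le>i. (f(m := Some u)) r = Some v"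
        proof (cases "v = u")
          case True
          then have "i \<in> ?C" using i fi by auto
          then show ?thesis using mle True by (intro exI[of _ m]) auto
        next
          case False
          then have "v \<in> V" using v by auto
          then obtain r where r: "r \<le> i" "f r = Some v" using I3 i fi by blast
          then have "r \<noteq> m" using mC by auto
          then show ?thesis using r by (intro exI[of _ r]) auto
        qed
      qed
    qed
  qed
qed

definition proc :: "('n::{finite,linorder} \<times> 'n) set \<Rightarrow> 'n \<Rightarrow> 'n list \<Rightarrow> ('n \<Rightarrow> 'n option) \<Rightarrow> ('n \<Rightarrow> 'n option)" where
  "proc D j vs f = fold (\<lambda>v f. fill_step D j f v) vs f"

lemma proc_Cons[simp]: "proc D j (v # vs) f = proc D j vs (fill_step D j f v)"
  by (simp add: proc_def)

lemma proc_Nil[simp]: "proc D j [] f = f"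
  by (simp add: proc_def)

lemma proc_append: "proc D j (vs @ us) f = proc D j us (proc D j vs f)"
  by (simp add: proc_def)

lemma proc_inv: "inv_f D j V f \<Longrightarrow> distinct us \<Longrightarrow> set us \<inter> V = {} \<Longrightarrow> inv_f D j (V \<union> set us) (proc D j us f)"
proof (induction us arbitrary: V f)
  case Nil then show ?case by simp
next
  case (Cons u us)
  have "inv_f D j (insert u V) (fill_step D j f u)" using Cons.prems by (intro inv_f_step) auto
  from Cons.IH[OF this] Cons.prems show ?case by simp
qed

lemma proc_persist: "f i = Some v \<Longrightarrow> proc D j us f i = Some v"
  by (induction us arbitrary: f) (auto simp: fill_step_persist)

lemma proc_new: "proc D j us f i = Some v \<Longrightarrow> f i = Some v \<or> v \<in> set us"
  by (induction us arbitrary: f) (auto dest: fill_step_new)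

lemma filling_col_proc: "filling_col D w j = proc D j (map w (sorted_list_of_set UNIV)) (\<lambda>_. None)"
  by (simp add: filling_col_def proc_def fold_map o_def)



abbreviation LL :: "'n::{finite,linorder} list" where
  "LL \<equiv> sorted_list_of_set UNIV"

lemma LL_props: "distinct (LL::'n::{finite,linorder} list)" "set (LL::'n list) = UNIV" "sorted_wrt (<) (LL::'n list)"
  using strict_sorted_list_of_set[of "UNIV::'n set"] by auto

lemma take_down:
  assumes "sorted_wrt (<) xs" "i \<in> set (take m xs)" "v \<in> set xs" "(v::'a::linorder) \<le> i"
  shows "v \<in> set (take m xs)"
proof (rule ccontr)
  assume "v \<notin> set (take m xs)"
  then have "v \<in> set (drop m xs)" using assms(3) by (metis Un_iff append_take_drop_id set_append)
  moreover have "sorted_wrt (<) (take m xs @ drop m xs)" using assms(1) by (simp only: append_take_drop_id)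
  ultimately have "i < v" using assms(2) unfolding sorted_wrt_append by blast
  then show False using assms(4) by simp
qed

lemma take_threshold:
  "sorted_wrt (<) xs \<Longrightarrow> \<exists>m. set (take m xs) = {i \<in> set xs. i \<le> (e::'a::linorder)}"
proof (induction xs)
  case Nil then show ?case by simp
next
  case (Cons x xs)
  show ?case
  proof (cases "x \<le> e")
    case True
    obtain m where "set (take m xs) = {i \<in> set xs. i \<le> e}" using Cons by auto
    then show ?thesis using True by (intro exI[of _ "Suc m"]) auto
  next
    case False
    have "\<forall>y\<in>set xs. x < y" using Cons.prems by simp
    then have "{i \<in> set (x # xs). i \<le> e} = {}" using False by (auto dest: order.strict_trans2)
    then show ?thesis by (intro exI[of _ 0]) simp
  qed
qed

lemma LL_take_drop: "set (drop m (LL::'n::{finite,linorder} list)) = - set (take m LL)"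
proof -
  have "set (take m (LL::'n list)) \<union> set (drop m LL) = UNIV"
    using LL_props(2) by (metis append_take_drop_id set_append)
  moreover have "set (take m (LL::'n list)) \<inter> set (drop m LL) = {}"
    using LL_props(1) by (simp add: set_take_disj_set_drop_if_distinct)
  ultimately show ?thesis by blast
qed

lemma len_filter_take: "length (filter P (take m (LL::'n::{finite,linorder} list))) = card {i \<in> set (take m LL). P i}"
  using LL_props(1) by (simp add: distinct_length_filter Int_def conj_commute)

lemma len_filter_drop: "length (filter P (drop m (LL::'n::{finite,linorder} list))) = card {i. i \<notin> set (take m LL) \<and> P i}"
proof -
  have "{x. P x} \<inter> set (drop m (LL::'n list)) = {i. i \<notin> set (take m LL) \<and> P i}"
    using LL_take_drop[of m, where 'n='n] by auto
  then show ?thesis using LL_props(1) by (simp add: distinct_length_filter)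
qed

lemma inv_I1: "inv_f D j V f \<Longrightarrow> f i = Some v \<Longrightarrow> (i,j) \<in> D \<and> v \<le> i \<and> v \<in> V"
  unfolding inv_f_def by blast
lemma inv_I2: "inv_f D j V f \<Longrightarrow> f i = Some v \<Longrightarrow> f i' = Some v \<Longrightarrow> i = i'"
  unfolding inv_f_def by blast
lemma inv_I3: "inv_f D j V f \<Longrightarrow> v \<in> V \<Longrightarrow> (i,j) \<in> D \<Longrightarrow> v \<le> i \<Longrightarrow> f i = None \<Longrightarrow> (\<exists>r\<le>i. f r = Some v)"
  unfolding inv_f_def by blast

lemma inj_the:
  assumes "\<And>a b v. f a = Some v \<Longrightarrow> f b = Some v \<Longrightarrow> a = b" "A \<subseteq> {i. f i \<noteq> None}"
  shows "inj_on (\<lambda>i. the (f i)) A"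
proof (rule inj_onI)
  fix a b assume ab: "a \<in> A" "b \<in> A" "the (f a) = the (f b)"
  then have "f a = Some (the (f a))" "f b = Some (the (f a))" using assms(2) by auto
  then show "a = b" by (rule assms(1))
qed

lemma len_filter_LL: "length (filter P (LL::'n::{finite,linorder} list)) = card {i. P i}"
  using LL_props(1,2)[where 'n='n] by (simp add: distinct_length_filter)

lemma count_le_split:
  fixes D :: "('n::{finite,linorder} \<times> 'n) set"
  assumes inv: "inv_f D j V f"
  shows "card {i. \<exists>v\<in>S. f i = Some v} \<le> length (filter (\<lambda>i. i \<in> S) (take m LL)) + length (filter (\<lambda>i. (i,j) \<in> D) (drop m LL))"
proof -
  let ?A = "{i. \<exists>v\<in>S. f i = Some v}"
  let ?T = "set (take m (LL::'n list))"
  note I1 = inv_I1[OF inv] and I2 = inv_I2[OF inv] and I3 = inv_I3[OF inv]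
  have "card ?A = card ((?A \<inter> ?T) \<union> (?A - ?T))" by (rule arg_cong[where f=card]) blast
  also have "\<dots> \<le> card (?A \<inter> ?T) + card (?A - ?T)" by (rule card_Un_le)
  finally have "card ?A \<le> card (?A \<inter> ?T) + card (?A - ?T)" .
  moreover have "card (?A - ?T) \<le> card {i. i \<notin> ?T \<and> (i,j) \<in> D}"
    using I1 by (intro card_mono) auto
  moreover have "card (?A \<inter> ?T) \<le> card {i \<in> ?T. i \<in> S}"
  proof (rule card_inj_on_le[where f = "\<lambda>i. the (f i)"])
    show "inj_on (\<lambda>i. the (f i)) (?A \<inter> ?T)"
      by (rule inj_the[OF I2]) auto
    show "(\<lambda>i. the (f i)) ` (?A \<inter> ?T) \<subseteq> {i \<in> ?T. i \<in> S}"
    proof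
      fix x assume "x \<in> (\<lambda>i. the (f i)) ` (?A \<inter> ?T)"
      then obtain i v where i: "i \<in> ?T" "v \<in> S" "f i = Some v" "x = v" by auto
      then have "v \<le> i" using I1 by blast
      then have "v \<in> ?T" using take_down[OF LL_props(3) i(1), of v] LL_props(2) by auto
      then show "x \<in> {i \<in> ?T. i \<in> S}" using i by auto
    qed
  qed simp
  ultimately show ?thesis by (simp add: len_filter_take len_filter_drop)
qed

lemma count_eq_split:
  fixes D :: "('n::{finite,linorder} \<times> 'n) set"
  assumes inv: "inv_f D j V f"
  shows "\<exists>m. card {i. f i \<noteq> None} = length (filter (\<lambda>i. i \<in> V) (take m LL)) + length (filter (\<lambda>i. (i,j) \<in> D) (drop m LL))"
proof -
  note I1 = inv_I1[OF inv] and I2 = inv_I2[OF inv] and I3 = inv_I3[OF inv]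
  let ?E = "{i. (i,j) \<in> D \<and> f i = None}"
  show ?thesis
  proof (cases "?E = {}")
    case True
    have "{i. f i \<noteq> None} = {i. (i,j) \<in> D}" using True I1 by fastforce
    then show ?thesis by (intro exI[of _ 0]) (simp add: len_filter_LL)
  next
    case False
    define e where "e = Max ?E"
    have eE: "e \<in> ?E" unfolding e_def using False by (intro Max_in) auto
    have Ele: "\<And>i. i \<in> ?E \<Longrightarrow> i \<le> e" unfolding e_def by (intro Max_ge) auto
    obtain m where m: "set (take m (LL::'n list)) = {i. i \<le> e}"
      using take_threshold[OF LL_props(3), of e] LL_props(2) by auto
    let ?A1 = "{i. f i \<noteq> None \<and> i \<le> e}"
    let ?A2 = "{i. f i \<noteq> None \<and> \<not> i \<le> e}"
    have split: "{i. f i \<noteq> None} = ?A1 \<union> ?A2" by auto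
    have c: "card {i. f i \<noteq> None} = card ?A1 + card ?A2"
      unfolding split by (rule card_Un_disjoint) auto
    have A2: "?A2 = {i. \<not> i \<le> e \<and> (i,j) \<in> D}"
    proof
      show "?A2 \<subseteq> {i. \<not> i \<le> e \<and> (i,j) \<in> D}" using I1 by auto
      show "{i. \<not> i \<le> e \<and> (i,j) \<in> D} \<subseteq> ?A2" using Ele by fastforce
    qed
    have A1: "card ?A1 = card {i. i \<le> e \<and> i \<in> V}"
    proof (rule bij_betw_same_card[where f = "\<lambda>i. the (f i)"])
      show "bij_betw (\<lambda>i. the (f i)) ?A1 {i. i \<le> e \<and> i \<in> V}"
        unfolding bij_betw_def
      proof
        show "inj_on (\<lambda>i. the (f i)) ?A1" by (rule inj_the[OF I2]) auto
        show "(\<lambda>i. the (f i)) ` ?A1 = {i. i \<le> e \<and> i \<in> V}"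
        proof
          show "(\<lambda>i. the (f i)) ` ?A1 \<subseteq> {i. i \<le> e \<and> i \<in> V}"
          proof (rule image_subsetI)
            fix i assume "i \<in> ?A1"
            then obtain v where v: "f i = Some v" "i \<le> e" by auto
            then have "v \<le> i" "v \<in> V" using I1 by auto
            then show "the (f i) \<in> {i. i \<le> e \<and> i \<in> V}" using v by auto
          qed
          show "{i. i \<le> e \<and> i \<in> V} \<subseteq> (\<lambda>i. the (f i)) ` ?A1"
          proof
            fix v assume v: "v \<in> {i. i \<le> e \<and> i \<in> V}"
            then obtain r where "r \<le> e" "f r = Some v" using I3 eE v by blast
            then show "v \<in> (\<lambda>i. the (f i)) ` ?A1" by (auto intro!: image_eqI[of _ _ r])
          qed
        qed
      qed
    qed
    show ?thesis using c A1 A2 m by (intro exI[of _ m]) (simp add: len_filter_take len_filter_drop)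
  qed
qed

lemma colB:
  fixes D :: "('n::{finite,linorder} \<times> 'n) set"
  assumes "inv_f D j V f"
  shows "card {i. \<exists>v\<in>S. f i = Some v} \<le> MS (\<lambda>i. i \<in> S) (\<lambda>i. (i,j) \<in> D) LL"
proof -
  obtain m where "MS (\<lambda>i. i \<in> S) (\<lambda>i. (i,j) \<in> D) (LL::'n list) = length (filter (\<lambda>i. i \<in> S) (take m LL)) + length (filter (\<lambda>i. (i,j) \<in> D) (drop m LL))"
    using MS_split_ex by blast
  then show ?thesis using count_le_split[OF assms] by simp
qed

lemma colA:
  fixes D :: "('n::{finite,linorder} \<times> 'n) set"
  assumes "inv_f D j V f"
  shows "card {i. f i \<noteq> None} = MS (\<lambda>i. i \<in> V) (\<lambda>i. (i,j) \<in> D) LL"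
proof (rule antisym)
  have "{i. f i \<noteq> None} = {i. \<exists>v\<in>V. f i = Some v}" using inv_I1[OF assms] by auto
  then show "card {i. f i \<noteq> None} \<le> MS (\<lambda>i. i \<in> V) (\<lambda>i. (i,j) \<in> D) LL"
    using colB[OF assms, of V] by simp
  obtain m where "card {i. f i \<noteq> None} = length (filter (\<lambda>i. i \<in> V) (take m LL)) + length (filter (\<lambda>i. (i,j) \<in> D) (drop m LL))"
    using count_eq_split[OF assms] by blast
  then show "MS (\<lambda>i. i \<in> V) (\<lambda>i. (i,j) \<in> D) LL \<le> card {i. f i \<noteq> None}"
    using MS_le_split by metis
qed



lemma card_pairs:
  "card {(i,j). P i (j::'b::finite)} = (\<Sum>j\<in>UNIV. card {i::'a::finite. P i j})"
proof -
  have e: "{(i,j). P i j} = (\<lambda>(j,i). (i,j)) ` (SIGMA j:UNIV. {i. P i j})" by auto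
  have "inj_on (\<lambda>(j,i). (i,j)) (SIGMA j:(UNIV::'b set). {i::'a. P i j})" by (auto intro!: inj_onI)
  then have "card {(i,j). P i j} = card (SIGMA j:(UNIV::'b set). {i::'a. P i j})"
    unfolding e by (rule card_image)
  then show ?thesis by simp
qed

lemma card_vals:
  fixes F :: "'a::finite \<Rightarrow> 'b::finite option"
  shows "(\<Sum>k\<in>S. card {i. F i = Some k}) = card {i. \<exists>v\<in>S. F i = Some v}"
proof -
  have fin: "finite S" by simp
  have "card (\<Union>k\<in>S. {i. F i = Some k}) = (\<Sum>k\<in>S. card {i. F i = Some k})"
    by (rule card_UN_disjoint) auto
  moreover have "(\<Union>k\<in>S. {i. F i = Some k}) = {i. \<exists>v\<in>S. F i = Some v}" by auto
  ultimately show ?thesis by simp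
qed

lemma sum_xw:
  fixes D :: "('n::{finite,linorder} \<times> 'n) set"
  shows "(\<Sum>k\<in>S. xw D w $ k) = real (\<Sum>j\<in>UNIV. card {i. \<exists>v\<in>S. filling_col D w j i = Some v})"
proof -
  have "(\<Sum>k\<in>S. xw D w $ k) = (\<Sum>k\<in>S. real (\<Sum>j\<in>UNIV. card {i. filling_col D w j i = Some k}))"
    by (simp add: xw_def card_pairs[where P = "\<lambda>i j. filling_col D w j i = Some _"])
  also have "\<dots> = real (\<Sum>k\<in>S. \<Sum>j\<in>UNIV. card {i. filling_col D w j i = Some k})"
    by simp
  also have "(\<Sum>k\<in>S. \<Sum>j\<in>UNIV. card {i. filling_col D w j i = Some k}) = (\<Sum>j\<in>UNIV. \<Sum>k\<in>S. card {i. filling_col D w j i = Some k})"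
    by (rule sum.swap)
  also have "\<dots> = (\<Sum>j\<in>UNIV. card {i. \<exists>v\<in>S. filling_col D w j i = Some v})"
    by (simp add: card_vals)
  finally show ?thesis .
qed

lemma theta_MS: "theta D S = (\<Sum>j\<in>UNIV. MS (\<lambda>i. i \<in> S) (\<lambda>i. (i,j) \<in> D) LL)"
  by (simp add: theta_def theta_col_MS)

lemma theta_UNIV:
  fixes D :: "('n::{finite,linorder} \<times> 'n) set"
  shows "theta D UNIV = card D"
proof -
  have "theta D UNIV = (\<Sum>j\<in>UNIV. card {i. (i,j) \<in> D})"
    by (simp add: theta_MS MS_all len_filter_LL)
  also have "\<dots> = card {(i,j). (i,j) \<in> D}" by (rule card_pairs[symmetric])
  finally show ?thesis by simp
qed

lemma inP:
  fixes D :: "('n::{finite,linorder} \<times> 'n) set"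
  assumes "y \<in> schubitope D"
  shows "(\<Sum>i\<in>T. y $ i) \<le> real (theta D T)"
proof (cases "T = UNIV")
  case True then show ?thesis using assms by (simp add: schubitope_def theta_UNIV)
next
  case False then show ?thesis using assms by (auto simp: schubitope_def)
qed

lemma perm_list:
  assumes "w permutes (UNIV::'n::{finite,linorder} set)"
  shows "distinct (map w LL)" "set (map w (LL::'n list)) = UNIV"
proof -
  have "inj w" using assms by (rule permutes_inj)
  then show "distinct (map w LL)" using LL_props(1) by (simp add: distinct_map inj_on_subset)
  have "surj w" using assms by (rule permutes_surj)
  then show "set (map w (LL::'n list)) = UNIV" using LL_props(2) by simp
qed

lemma final_inv:
  fixes D :: "('n::{finite,linorder} \<times> 'n) set"
  assumes "w permutes (UNIV::'n set)"
  shows "inv_f D j UNIV (filling_col D w j)"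
  using proc_inv[OF inv_f_empty perm_list(1)[OF assms], of D j] perm_list(2)[OF assms]
  by (simp add: filling_col_proc)

lemma xw_in:
  fixes D :: "('n::{finite,linorder} \<times> 'n) set"
  assumes w: "w permutes (UNIV::'n set)"
  shows "xw D w \<in> schubitope D"
proof -
  have le: "(\<Sum>k\<in>S. xw D w $ k) \<le> real (theta D S)" for S
  proof -
    have "(\<Sum>j\<in>UNIV. card {i. \<exists>v\<in>S. filling_col D w j i = Some v}) \<le> (\<Sum>j\<in>UNIV. MS (\<lambda>i. i \<in> S) (\<lambda>i. (i,j) \<in> D) LL)"
      by (intro sum_mono colB[OF final_inv[OF w]])
    then show ?thesis by (simp only: sum_xw theta_MS of_nat_le_iff)
  qed
  have eq: "(\<Sum>k\<in>UNIV. xw D w $ k) = real (card D)"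
  proof -
    have "\<And>j. card {i. \<exists>v\<in>UNIV. filling_col D w j i = Some v} = MS (\<lambda>i. i \<in> UNIV) (\<lambda>i. (i,j) \<in> D) LL"
      using colA[OF final_inv[OF w]] by simp
    then have "(\<Sum>k\<in>UNIV. xw D w $ k) = real (theta D UNIV)"
      by (simp add: sum_xw theta_MS)
    then show ?thesis by (simp add: theta_UNIV)
  qed
  show ?thesis using le eq by (simp add: schubitope_def)
qed

lemma xw_prefix:
  fixes D :: "('n::{finite,linorder} \<times> 'n) set"
  assumes w: "w permutes (UNIV::'n set)"
  shows "(\<Sum>i\<in>set (take k (map w LL)). xw D w $ i) = real (theta D (set (take k (map w LL))))"
proof -
  let ?vs = "map w (LL::'n list)"
  let ?T = "set (take k ?vs)"
  have dist: "distinct ?vs" by (rule perm_list(1)[OF w])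
  have col: "card {i. \<exists>v\<in>?T. filling_col D w j i = Some v} = MS (\<lambda>i. i \<in> ?T) (\<lambda>i. (i,j) \<in> D) LL" for j
  proof -
    let ?g = "proc D j (take k ?vs) (\<lambda>_. None)"
    have ginv: "inv_f D j ?T ?g"
      using proc_inv[OF inv_f_empty, of "take k ?vs" D j] dist by simp
    have F: "filling_col D w j = proc D j (drop k ?vs) ?g"
      by (simp add: filling_col_proc flip: proc_append)
    have disj: "?T \<inter> set (drop k ?vs) = {}" using set_take_disj_set_drop_if_distinct[OF dist, of k k] by simp
    have "{i. \<exists>v\<in>?T. filling_col D w j i = Some v} = {i. ?g i \<noteq> None}"
    proof
      show "{i. \<exists>v\<in>?T. filling_col D w j i = Some v} \<subseteq> {i. ?g i \<noteq> None}"
      proof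
        fix i assume "i \<in> {i. \<exists>v\<in>?T. filling_col D w j i = Some v}"
        then obtain v where v: "v \<in> ?T" "proc D j (drop k ?vs) ?g i = Some v" using F by auto
        from proc_new[OF v(2)] v(1) disj show "i \<in> {i. ?g i \<noteq> None}" by auto
      qed
      show "{i. ?g i \<noteq> None} \<subseteq> {i. \<exists>v\<in>?T. filling_col D w j i = Some v}"
      proof
        fix i assume "i \<in> {i. ?g i \<noteq> None}"
        then obtain v where v: "?g i = Some v" by auto
        then have "v \<in> ?T" using inv_I1[OF ginv v] by simp
        moreover have "filling_col D w j i = Some v" unfolding F by (rule proc_persist[where f="?g", OF v])
        ultimately show "i \<in> {i. \<exists>v\<in>?T. filling_col D w j i = Some v}" by auto
      qed
    qed
    then show ?thesis using colA[OF ginv] by simp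
  qed
  show ?thesis by (simp add: sum_xw theta_MS col)
qed



lemma sum_take_nth:
  assumes "distinct xs" "k \<le> length xs"
  shows "(\<Sum>i\<in>set (take k xs). g i) = (\<Sum>p<k. g (xs ! p))"
  using assms(2)
proof (induction k)
  case 0 then show ?case by simp
next
  case (Suc k)
  have t: "take (Suc k) xs = take k xs @ [xs ! k]" using Suc.prems by (simp add: take_Suc_conv_app_nth)
  have "distinct (take (Suc k) xs)" using assms(1) by simp
  then have "xs ! k \<notin> set (take k xs)" by (simp add: t)
  then show ?case using Suc by (simp add: t add.commute)
qed

lemma convex_schub: "convex (schubitope D)"
  unfolding convex_def
proof (intro ballI allI impI)
  fix x y and u v :: real
  assume x: "x \<in> schubitope D" and y: "y \<in> schubitope D" and uv: "0 \<le> u" "0 \<le> v" "u + v = 1"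
  have s: "(\<Sum>i\<in>S. (u *\<^sub>R x + v *\<^sub>R y) $ i) = u * (\<Sum>i\<in>S. x $ i) + v * (\<Sum>i\<in>S. y $ i)" for S
    by (simp add: sum.distrib sum_distrib_left)
  have uvt: "u * t + v * t = t" for t :: real
  proof -
    have "u * t + v * t = (u + v) * t" by (simp add: algebra_simps)
    then show ?thesis using uv(3) by simp
  qed
  have "(\<Sum>i\<in>UNIV. (u *\<^sub>R x + v *\<^sub>R y) $ i) = real (card D)"
    using x y unfolding s by (simp add: schubitope_def uvt)
  moreover have "(\<Sum>i\<in>S. (u *\<^sub>R x + v *\<^sub>R y) $ i) \<le> real (theta D S)" if "S \<subset> UNIV" for S
  proof -
    have "(\<Sum>i\<in>S. x $ i) \<le> real (theta D S)" "(\<Sum>i\<in>S. y $ i) \<le> real (theta D S)"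
      using x y that by (auto simp: schubitope_def)
    then have "u * (\<Sum>i\<in>S. x $ i) + v * (\<Sum>i\<in>S. y $ i) \<le> u * real (theta D S) + v * real (theta D S)"
      using uv by (intro add_mono mult_left_mono) auto
    also have "\<dots> = real (theta D S)" by (rule uvt)
    finally show ?thesis unfolding s .
  qed
  ultimately show "u *\<^sub>R x + v *\<^sub>R y \<in> schubitope D" by (simp add: schubitope_def)
qed

lemma prefix_eq_vec:
  fixes y z :: "real ^ 'm::finite"
  assumes "distinct vs" "set vs = UNIV"
    and eq: "\<And>k. (\<Sum>i\<in>set (take k vs). y $ i) = (\<Sum>i\<in>set (take k vs). z $ i)"
  shows "y = z"
unfolding vec_eq_iff
proof
  fix i
  have "i \<in> set vs" using assms(2) by simp
  then obtain p where p: "p < length vs" "vs ! p = i" by (auto simp: in_set_conv_nth)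
  have "(\<Sum>q<Suc p. y $ (vs ! q)) = (\<Sum>q<Suc p. z $ (vs ! q))"
    using eq[of "Suc p"] sum_take_nth[OF assms(1), of "Suc p" "\<lambda>i. y $ i"] sum_take_nth[OF assms(1), of "Suc p" "\<lambda>i. z $ i"] p(1) by simp
  moreover have "(\<Sum>q<p. y $ (vs ! q)) = (\<Sum>q<p. z $ (vs ! q))"
    using eq[of p] sum_take_nth[OF assms(1), of p "\<lambda>i. y $ i"] sum_take_nth[OF assms(1), of p "\<lambda>i. z $ i"] p(1) by simp
  ultimately show "y $ i = z $ i" using p by simp
qed

lemma seg_eq:
  fixes A B X u :: real
  assumes "A \<le> X" "B \<le> X" "(1 - u) * A + u * B = X" "0 < u" "u < 1"
  shows "A = X \<and> B = X"
proof -
  have "(1 - u) * (X - A) + u * (X - B) = X - ((1 - u) * A + u * B)" by (simp add: algebra_simps)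
  then have h: "(1 - u) * (X - A) + u * (X - B) = 0" using assms(3) by simp
  have p1: "0 \<le> (1 - u) * (X - A)" using assms by simp
  have p2: "0 \<le> u * (X - B)" using assms by simp
  have "(1 - u) * (X - A) = 0" "u * (X - B) = 0" using h p1 p2 by linarith+
  then show ?thesis using assms(4,5) by simp
qed

lemma xw_extreme:
  fixes D :: "('n::{finite,linorder} \<times> 'n) set"
  assumes w: "w permutes (UNIV::'n set)"
  shows "xw D w extreme_point_of schubitope D"
  unfolding extreme_point_of_def
proof (intro conjI ballI)
  show "xw D w \<in> schubitope D" by (rule xw_in[OF w])
  fix a b assume a: "a \<in> schubitope D" and b: "b \<in> schubitope D"
  show "xw D w \<notin> open_segment a b"
  proof
    assume "xw D w \<in> open_segment a b"
    then obtain u where ab: "a \<noteq> b" "0 < u" "u < 1" and x: "xw D w = (1 - u) *\<^sub>R a + u *\<^sub>R b"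
      by (auto simp: in_segment)
    let ?vs = "map w (LL::'n list)"
    have pe: "(\<Sum>i\<in>set (take k ?vs). a $ i) = (\<Sum>i\<in>set (take k ?vs). xw D w $ i) \<and>
              (\<Sum>i\<in>set (take k ?vs). b $ i) = (\<Sum>i\<in>set (take k ?vs). xw D w $ i)" for k
    proof -
      let ?T = "set (take k ?vs)"
      have X: "(\<Sum>i\<in>?T. xw D w $ i) = real (theta D ?T)" by (rule xw_prefix[OF w])
      have A: "(\<Sum>i\<in>?T. a $ i) \<le> real (theta D ?T)" by (rule inP[OF a])
      have B: "(\<Sum>i\<in>?T. b $ i) \<le> real (theta D ?T)" by (rule inP[OF b])
      have "(\<Sum>i\<in>?T. xw D w $ i) = (1 - u) * (\<Sum>i\<in>?T. a $ i) + u * (\<Sum>i\<in>?T. b $ i)"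
        unfolding x by (simp add: sum.distrib sum_distrib_left)
      then have "(1 - u) * (\<Sum>i\<in>?T. a $ i) + u * (\<Sum>i\<in>?T. b $ i) = real (theta D ?T)" using X by simp
      then show ?thesis using seg_eq[OF A B _ ab(2,3)] X by simp
    qed
    have "a = xw D w" using perm_list[OF w] pe by (intro prefix_eq_vec[of ?vs]) auto
    moreover have "b = xw D w" using perm_list[OF w] pe by (intro prefix_eq_vec[of ?vs]) auto
    ultimately show False using ab by simp
  qed
qed

lemma abel:
  fixes a d :: "nat \<Rightarrow> real"
  assumes mono: "\<And>p q. p \<le> q \<Longrightarrow> q < N \<Longrightarrow> a q \<le> a p"
    and G: "\<And>k. k \<le> N \<Longrightarrow> 0 \<le> (\<Sum>p<k. d p)"
    and tot: "(\<Sum>p<N. d p) = 0" and N: "0 < N"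
  shows "0 \<le> (\<Sum>p<N. a p * d p)"
proof -
  have claim: "k < N \<Longrightarrow> a k * (\<Sum>p<Suc k. d p) \<le> (\<Sum>p<Suc k. a p * d p)" for k
  proof (induction k)
    case 0 then show ?case by simp
  next
    case (Suc k)
    have ih: "a k * (\<Sum>p<Suc k. d p) \<le> (\<Sum>p<Suc k. a p * d p)" using Suc by simp
    have "0 \<le> (a k - a (Suc k)) * (\<Sum>p<Suc k. d p)"
      using mono[of k "Suc k"] G[of "Suc k"] Suc.prems by (intro mult_nonneg_nonneg) auto
    then have "a (Suc k) * (\<Sum>p<Suc k. d p) \<le> a k * (\<Sum>p<Suc k. d p)" by (simp add: algebra_simps)
    then show ?case using ih by (simp add: algebra_simps)
  qed
  obtain k where k: "N = Suc k" using N by (cases N) auto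
  show ?thesis using claim[of k] k tot by simp
qed

lemma greedy:
  fixes D :: "('n::{finite,linorder} \<times> 'n) set" and c :: "real ^ ('n::{finite,linorder})"
  shows "\<exists>w. w permutes (UNIV::'n set) \<and> (\<forall>y\<in>schubitope D. inner c y \<le> inner c (xw D w))"
proof -
  let ?L = "LL::'n list"
  let ?N = "length ?L"
  define \<sigma> where "\<sigma> = sort_key (\<lambda>i. - c $ i) ?L"
  have sd: "distinct \<sigma>" "set \<sigma> = UNIV" "length \<sigma> = ?N"
    using LL_props(1,2)[where 'n='n] by (auto simp: \<sigma>_def)
  have ss: "sorted (map (\<lambda>i. - c $ i) \<sigma>)" unfolding \<sigma>_def by simp
  have cmono: "c $ (\<sigma> ! q) \<le> c $ (\<sigma> ! p)" if "p \<le> q" "q < ?N" for p q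
    using sorted_nth_mono[OF ss, of p q] that sd(3) by simp
  define w where "w = (\<lambda>x. \<sigma> ! (inv_into {..<?N} ((!) ?L) x))"
  have bL: "bij_betw ((!) ?L) {..<?N} UNIV" using LL_props(1,2)[where 'n='n] by (intro bij_betw_nth) auto
  have bS: "bij_betw ((!) \<sigma>) {..<?N} UNIV" using sd by (intro bij_betw_nth) auto
  have bw: "bij_betw w UNIV UNIV"
    unfolding w_def using bij_betw_trans[OF bij_betw_inv_into[OF bL] bS] by (simp add: o_def)
  have wperm: "w permutes (UNIV::'n set)" by (rule bij_imp_permutes[OF bw]) simp
  have mw: "map w ?L = \<sigma>"
  proof (rule nth_equalityI)
    show "length (map w ?L) = length \<sigma>" using sd by simp
    fix k assume "k < length (map w ?L)"
    then have k: "k < ?N" by simp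
    have "inv_into {..<?N} ((!) ?L) (?L ! k) = k"
      using bL k by (intro inv_into_f_f) (auto simp: bij_betw_def)
    then show "map w ?L ! k = \<sigma> ! k" using k by (simp add: w_def)
  qed
  have "?L \<noteq> []"
  proof
    assume "?L = []"
    then have "set ?L = {}" by simp
    then show False using LL_props(2)[where 'n='n] by simp
  qed
  then have N0: "0 < ?N" by simp
  have tot: "(\<Sum>i\<in>UNIV. g i) = (\<Sum>p<?N. g (\<sigma> ! p))" for g :: "'n \<Rightarrow> real"
    using sum_take_nth[OF sd(1), of ?N g] sd by simp
  show ?thesis
  proof (intro exI conjI ballI)
    show "w permutes UNIV" by (rule wperm)
    fix y assume y: "y \<in> schubitope D"
    let ?x = "xw D w"
    have pre: "(\<Sum>p<k. y $ (\<sigma> ! p)) \<le> (\<Sum>p<k. ?x $ (\<sigma> ! p))" if "k \<le> ?N" for k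
    proof -
      have "(\<Sum>i\<in>set (take k \<sigma>). y $ i) \<le> real (theta D (set (take k \<sigma>)))" by (rule inP[OF y])
      also have "\<dots> = (\<Sum>i\<in>set (take k \<sigma>). ?x $ i)" using xw_prefix[OF wperm, of D k] mw by simp
      finally show ?thesis
        using sum_take_nth[OF sd(1), of k "\<lambda>i. y $ i"] sum_take_nth[OF sd(1), of k "\<lambda>i. ?x $ i"] that sd(3) by simp
    qed
    have teq: "(\<Sum>p<?N. y $ (\<sigma> ! p)) = (\<Sum>p<?N. ?x $ (\<sigma> ! p))"
    proof -
      have "(\<Sum>i\<in>UNIV. y $ i) = real (card D)" "(\<Sum>i\<in>UNIV. ?x $ i) = real (card D)"
        using y xw_in[OF wperm, of D] by (auto simp: schubitope_def)
      moreover have "(\<Sum>p<?N. y $ (\<sigma> ! p)) = (\<Sum>i\<in>UNIV. y $ i)" using tot[of "\<lambda>i. y $ i"] by simp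
      moreover have "(\<Sum>p<?N. ?x $ (\<sigma> ! p)) = (\<Sum>i\<in>UNIV. ?x $ i)" using tot[of "\<lambda>i. ?x $ i"] by simp
      ultimately show ?thesis by simp
    qed
    have "0 \<le> (\<Sum>p<?N. c $ (\<sigma> ! p) * (?x $ (\<sigma> ! p) - y $ (\<sigma> ! p)))"
    proof (rule abel[where N = ?N])
      show "\<And>p q. p \<le> q \<Longrightarrow> q < ?N \<Longrightarrow> c $ (\<sigma> ! q) \<le> c $ (\<sigma> ! p)" by (rule cmono)
      show "\<And>k. k \<le> ?N \<Longrightarrow> 0 \<le> (\<Sum>p<k. ?x $ (\<sigma> ! p) - y $ (\<sigma> ! p))"
        using pre by (simp add: sum_subtractf)
      show "(\<Sum>p<?N. ?x $ (\<sigma> ! p) - y $ (\<sigma> ! p)) = 0" using teq by (simp add: sum_subtractf)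
      show "0 < ?N" by (rule N0)
    qed
    then have "(\<Sum>p<?N. c $ (\<sigma> ! p) * y $ (\<sigma> ! p)) \<le> (\<Sum>p<?N. c $ (\<sigma> ! p) * ?x $ (\<sigma> ! p))"
      by (simp add: algebra_simps sum_subtractf)
    then show "inner c y \<le> inner c ?x"
      by (simp add: inner_vec_def tot[of "\<lambda>i. c $ i * y $ i"] tot[of "\<lambda>i. c $ i * ?x $ i"])
  qed
qed

theorem theorem1p1:
  fixes D :: "('n::{finite,linorder} \<times> 'n) set"
  shows "{x. x extreme_point_of schubitope D} = {xw D w | w. w permutes (UNIV :: 'n set)}"
proof -
  let ?P = "schubitope D"
  let ?X = "{xw D w | w. w permutes (UNIV :: 'n set)}"
  have Xeq: "?X = xw D ` {w. w permutes (UNIV::'n set)}" by auto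
  have finX: "finite ?X" unfolding Xeq by (intro finite_imageI finite_permutations) simp
  have XP: "?X \<subseteq> ?P" using xw_in by blast
  have hullP: "convex hull ?X \<subseteq> ?P" by (rule hull_minimal[OF XP]) (rule convex_schub)
  have Phull: "?P \<subseteq> convex hull ?X"
  proof
    fix y assume y: "y \<in> ?P"
    show "y \<in> convex hull ?X"
    proof (rule ccontr)
      assume ny: "y \<notin> convex hull ?X"
      have "closed (convex hull ?X)"
        using finX by (intro compact_imp_closed compact_convex_hull finite_imp_compact)
      then obtain a b where ab: "inner a y < b" "\<forall>z\<in>convex hull ?X. inner a z > b"
        using separating_hyperplane_closed_point[OF convex_convex_hull _ ny] by blast
      obtain w where w: "w permutes (UNIV::'n set)" "\<forall>y\<in>?P. inner (-a) y \<le> inner (-a) (xw D w)"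
        using greedy[of D "-a"] by blast
      have "xw D w \<in> convex hull ?X" using w(1) by (intro hull_inc) blast
      then have "inner a (xw D w) > b" using ab by blast
      moreover have "inner (-a) y \<le> inner (-a) (xw D w)" using w(2) y by blast
      ultimately show False using ab(1) by simp
    qed
  qed
  have Peq: "?P = convex hull ?X" using hullP Phull by blast
  show ?thesis
  proof
    show "{x. x extreme_point_of ?P} \<subseteq> ?X"
      using extreme_point_of_convex_hull[of _ ?X] Peq by auto
    show "?X \<subseteq> {x. x extreme_point_of ?P}" using xw_extreme by blast
  qed
qed


end
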